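(* Let $\kappa>0$, $m>0$, and let $L_{\kappa,m}$ be as in the context. Suppose $\delta\in(0,1)$ and $0<\rho_1<\rho_2<\min\{R_\kappa,m\delta\}$. Then with $\beta=\sqrt{1-\delta^2}$, \[\frac{L_{\kappa,m}(\rho_2)}{L_{\kappa,m}(\rho_1)}\ge\frac12\left[\left(\frac{\rho_2}{\rho_1}\right)^{\beta m}-\left(\frac{\rho_2}{\rho_1}\right)^{-\beta m}\right].\]
   Context: For $\kappa>0$: $\sin_\kappa(\rho)=\sin(\sqrt{\kappa}\rho)/\sqrt{\kappa}$, $\cos_\kappa=(\sin_\kappa)'$, $R_\kappa=\pi/(2\sqrt{\kappa})$. $L_{\kappa,m}$ is a solution of \[\sin_\kappa^2(\rho)L''(\rho)+\sin_\kappa(\rho)\cos_\kappa(\rho)L'(\rho)+(\sin_\kappa^2(\rho)-m^2)L(\rho)=0\] that is well defined (regular) at $\rho=0$ and positive on some interval $(0,\varepsilon)$. *)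

theory Defs
  imports "HOL-Analysis.Analysis"
begin

definition sin_k :: "real \<Rightarrow> real \<Rightarrow> real" where
  "sin_k \<kappa> \<rho> = sin (sqrt \<kappa> * \<rho>) / sqrt \<kappa>"

definition cos_k :: "real \<Rightarrow> real \<Rightarrow> real" where
  "cos_k \<kappa> \<rho> = cos (sqrt \<kappa> * \<rho>)"

definition R_k :: "real \<Rightarrow> real" where
  "R_k \<kappa> = pi / (2 * sqrt \<kappa>)"

definition is_L :: "real \<Rightarrow> real \<Rightarrow> (real \<Rightarrow> real) \<Rightarrow> bool" where
  "is_L \<kappa> m L \<longleftrightarrow>
     (\<exists>L' L''. \<forall>\<rho>\<in>{0<..<R_k \<kappa>}.
        (L has_real_derivative L' \<rho>) (at \<rho>) \<and>
        (L' has_real_derivative L'' \<rho>) (at \<rho>) \<and>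
        (sin_k \<kappa> \<rho>)^2 * L'' \<rho> + sin_k \<kappa> \<rho> * cos_k \<kappa> \<rho> * L' \<rho>
          + ((sin_k \<kappa> \<rho>)^2 - m^2) * L \<rho> = 0)
   \<and> (\<exists>c. (L \<longlongrightarrow> c) (at_right 0))
   \<and> (\<exists>\<epsilon>>0. \<forall>\<rho>\<in>{0<..<\<epsilon>}. L \<rho> > 0)"

end

theory Submission
  imports Defs
begin

lemma incr_strict:
  fixes f f' :: "real \<Rightarrow> real"
  assumes "a < b" "\<And>x. a \<le> x \<Longrightarrow> x \<le> b \<Longrightarrow> (f has_real_derivative f' x) (at x)"
    "\<And>x. a < x \<Longrightarrow> x < b \<Longrightarrow> f' x > 0"
  shows "f a < f b"
proof -
  obtain z where "a < z" "z < b" "f b - f a = (b - a) * f' z" using MVT2[OF assms(1,2)] by blast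
  moreover have "f' z > 0" using assms(3) calculation by auto
  moreover have "(b - a) * f' z > 0" using assms(1) calculation by simp
  ultimately show ?thesis by linarith
qed

lemma incr_weak:
  fixes f f' :: "real \<Rightarrow> real"
  assumes "a \<le> b" "\<And>x. a \<le> x \<Longrightarrow> x \<le> b \<Longrightarrow> (f has_real_derivative f' x) (at x)"
    "\<And>x. a < x \<Longrightarrow> x < b \<Longrightarrow> f' x \<ge> 0"
  shows "f a \<le> f b"
proof (cases "a = b")
  case False
  then have "a < b" using assms by simp
  obtain z where "a < z" "z < b" "f b - f a = (b - a) * f' z" using MVT2[OF \<open>a<b\<close> assms(2)] by blast
  moreover have "f' z \<ge> 0" using assms(3) calculation by auto
  ultimately show ?thesis using \<open>a<b\<close> by (metis diff_ge_0_iff_ge less_eq_real_def mult_nonneg_nonneg)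
qed simp

lemma sk_props:
  assumes "\<kappa> > 0" "0 < \<rho>" "\<rho> < R_k \<kappa>"
  shows "0 < sin_k \<kappa> \<rho>" "sin_k \<kappa> \<rho> \<le> \<rho>" "sqrt \<kappa> * \<rho> < pi/2"
proof -
  have sq: "sqrt \<kappa> > 0" using assms by simp
  show lt: "sqrt \<kappa> * \<rho> < pi/2" using assms(3) sq unfolding R_k_def
    by (simp add: field_simps)
  have "sin (sqrt \<kappa> * \<rho>) > 0" apply (rule sin_gt_zero) using sq assms lt pi_gt_zero by (auto, linarith)
  then show "0 < sin_k \<kappa> \<rho>" unfolding sin_k_def using sq by simp
  have "sin (sqrt \<kappa> * \<rho>) \<le> sqrt \<kappa> * \<rho>" apply (rule sin_x_le_x) using sq assms by simp
  then show "sin_k \<kappa> \<rho> \<le> \<rho>" unfolding sin_k_def using sq by (simp add: field_simps)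
qed

lemma dsk: assumes "\<kappa> > 0" shows "(sin_k \<kappa> has_real_derivative cos_k \<kappa> \<rho>) (at \<rho>)"
  unfolding sin_k_def[abs_def] cos_k_def using assms
  apply (auto intro!: derivative_eq_intros)
  apply (simp add: mult.assoc)
  done

lemma dtt:
  assumes "\<kappa> > 0" "0 < \<rho>" "\<rho> < R_k \<kappa>"
  shows "((\<lambda>r. ln (tan (sqrt \<kappa> * r / 2))) has_real_derivative 1 / sin_k \<kappa> \<rho>) (at \<rho>)"
proof -
  define y where "y = sqrt \<kappa> * \<rho> / 2"
  have sq: "sqrt \<kappa> > 0" using assms by simp
  have y: "0 < y" "y < pi/4" using sk_props[OF assms] sq assms unfolding y_def by (auto simp: mult.commute)
  have cy: "cos y > 0" apply (rule cos_gt_zero) using y by auto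
  have sy: "sin y > 0" apply (rule sin_gt_zero) using y by auto
  have ty: "tan y > 0" using cy sy by (simp add: tan_def)
  have c: "cos (sqrt \<kappa> * \<rho> / 2) \<noteq> 0" and t: "tan (sqrt \<kappa> * \<rho> / 2) > 0"
    using cy ty y_def by auto
  have i: "((\<lambda>r. sqrt \<kappa> * r / 2) has_real_derivative sqrt \<kappa> / 2) (at \<rho>)"
    by (auto intro!: derivative_eq_intros)
  have d1: "((\<lambda>r. tan (sqrt \<kappa> * r / 2)) has_real_derivative inverse ((cos (sqrt \<kappa> * \<rho> / 2))\<^sup>2) * (sqrt \<kappa> / 2)) (at \<rho>)"
    using DERIV_chain2[OF DERIV_tan[OF c] i] .
  have "((\<lambda>r. ln (tan (sqrt \<kappa> * r / 2))) has_real_derivative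
      (1 / tan y) * (inverse ((cos y)\<^sup>2) * (sqrt \<kappa> / 2))) (at \<rho>)"
    using DERIV_chain2[OF DERIV_ln_divide[OF t] d1] unfolding y_def .
  moreover have "(1 / tan y) * (inverse ((cos y)\<^sup>2) * (sqrt \<kappa> / 2)) = 1 / sin_k \<kappa> \<rho>"
  proof -
    have "sqrt \<kappa> * \<rho> = 2 * y" unfolding y_def by simp
    then have "sin_k \<kappa> \<rho> = 2 * sin y * cos y / sqrt \<kappa>" unfolding sin_k_def by (simp add: sin_double)
    moreover have "(1 / tan y) * (inverse ((cos y)\<^sup>2) * (sqrt \<kappa> / 2)) = sqrt \<kappa> / (2 * sin y * cos y)"
      using cy sy by (simp add: tan_def field_simps power2_eq_square)
    ultimately show ?thesis using cy sy sq by simp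
  qed
  ultimately show ?thesis by simp
qed

theorem mainTheorem4:
  fixes \<kappa> m \<delta> \<rho>1 \<rho>2 :: real and L :: "real \<Rightarrow> real"
  assumes "\<kappa> > 0" and "m > 0" and "is_L \<kappa> m L"
    and "0 < \<delta>" and "\<delta> < 1"
    and "0 < \<rho>1" and "\<rho>1 < \<rho>2" and "\<rho>2 < min (R_k \<kappa>) (m * \<delta>)"
  shows "L \<rho>2 / L \<rho>1 \<ge>
    (1/2) * ((\<rho>2/\<rho>1) powr (sqrt (1 - \<delta>^2) * m) - (\<rho>2/\<rho>1) powr (- (sqrt (1 - \<delta>^2) * m)))"
proof -
  note kp = assms(1) and mp = assms(2)
  define s where "s = sin_k \<kappa>"
  define R where "R = R_k \<kappa>"
  define a where "a = sqrt (1 - \<delta>^2) * m"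
  have r2R: "\<rho>2 < R" and r2m: "\<rho>2 < m * \<delta>" using assms(8) unfolding R_def by auto
  have sk: "0 < s \<rho> \<and> s \<rho> \<le> \<rho>" if "0 < \<rho>" "\<rho> < R" for \<rho>
    using sk_props[OF kp, of \<rho>] that unfolding s_def R_def by auto
  obtain L' L'' where D: "\<forall>\<rho>\<in>{0<..<R}.
        (L has_real_derivative L' \<rho>) (at \<rho>) \<and>
        (L' has_real_derivative L'' \<rho>) (at \<rho>) \<and>
        (s \<rho>)^2 * L'' \<rho> + s \<rho> * cos_k \<kappa> \<rho> * L' \<rho>
          + ((s \<rho>)^2 - m^2) * L \<rho> = 0"
    using assms(3) unfolding is_L_def s_def R_def by blast
  obtain c where lim: "(L \<longlongrightarrow> c) (at_right 0)" using assms(3) unfolding is_L_def by blast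
  obtain \<epsilon> where ep: "\<epsilon> > 0" and Lsmall: "\<And>\<rho>. 0 < \<rho> \<Longrightarrow> \<rho> < \<epsilon> \<Longrightarrow> L \<rho> > 0"
    using assms(3) unfolding is_L_def by auto
  have dL: "(L has_real_derivative L' \<rho>) (at \<rho>)" if "0 < \<rho>" "\<rho> < R" for \<rho>
    using D that by auto
  define u where "u = (\<lambda>\<rho>. s \<rho> * L' \<rho>)"
  define du where "du = (\<lambda>\<rho>. (m^2 - (s \<rho>)^2) * L \<rho> / s \<rho>)"
  have duD: "(u has_real_derivative du \<rho>) (at \<rho>)" if "0 < \<rho>" "\<rho> < R" for \<rho>
  proof -
    have d1: "(u has_real_derivative cos_k \<kappa> \<rho> * L' \<rho> + L'' \<rho> * s \<rho>) (at \<rho>)"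
      unfolding u_def using DERIV_mult[OF dsk[OF kp] conjunct1[OF conjunct2[OF D[rule_format, of \<rho>]]]] that
      unfolding s_def by simp
    have ode: "(s \<rho>)^2 * L'' \<rho> + s \<rho> * cos_k \<kappa> \<rho> * L' \<rho> + ((s \<rho>)^2 - m^2) * L \<rho> = 0"
      using D that by auto
    have sp: "s \<rho> > 0" using sk that by auto
    have "s \<rho> * (cos_k \<kappa> \<rho> * L' \<rho> + L'' \<rho> * s \<rho>) = (m^2 - (s \<rho>)^2) * L \<rho>"
      using ode by (simp add: algebra_simps power2_eq_square)
    then have "cos_k \<kappa> \<rho> * L' \<rho> + L'' \<rho> * s \<rho> = du \<rho>"
      unfolding du_def using sp by (simp add: field_simps)
    then show ?thesis using d1 by simp
  qed
  have asq: "a^2 = (1 - \<delta>^2) * m^2" unfolding a_def using assms(4,5)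
    using power_le_one[of \<delta> 2] by (simp add: power_mult_distrib)
  have a0: "a \<ge> 0" unfolding a_def using assms(4,5) mp power_le_one[of \<delta> 2] by simp
  have slt: "(s \<rho>)^2 + a^2 \<le> m^2 \<and> s \<rho> < m" if "0 < \<rho>" "\<rho> \<le> \<rho>2" for \<rho>
  proof -
    have "0 < s \<rho>" "s \<rho> \<le> \<rho>" using sk[of \<rho>] that r2R by auto
    then have "(s \<rho>)^2 \<le> \<rho>^2" by (simp add: power_mono)
    also have "\<rho>^2 \<le> (m * \<delta>)^2" using that r2m by (intro power_mono) auto
    finally have "(s \<rho>)^2 + a^2 \<le> m^2" using asq by (simp add: algebra_simps power_mult_distrib)
    moreover have "s \<rho> < m" using \<open>s \<rho> \<le> \<rho>\<close> that r2m assms(4,5) mp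
      by (smt (verit) mult_less_cancel_left1)
    ultimately show ?thesis by simp
  qed
  have dupos: "du \<rho> > 0" if "0 < \<rho>" "\<rho> \<le> \<rho>2" "L \<rho> > 0" for \<rho>
  proof -
    have "s \<rho> > 0" "s \<rho> < m" using sk[of \<rho>] slt[of \<rho>] that r2R by auto
    then have "m^2 - (s \<rho>)^2 > 0" using mp by (simp add: power_strict_mono)
    then show ?thesis unfolding du_def using that \<open>s \<rho> > 0\<close> by simp
  qed
  define a0 where "a0 = min \<rho>1 (min \<epsilon> \<rho>2) / 2"
  have a0p: "0 < a0" "a0 < \<rho>1" "a0 < \<epsilon>" "a0 < \<rho>2" unfolding a0_def using ep assms(6,7) by auto
  have ua0: "u a0 > 0"
  proof (rule ccontr)
    assume "\<not> u a0 > 0"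
    define z where "z = a0 / 2"
    have zp: "0 < z" "z < a0" using a0p unfolding z_def by auto
    have "u z < u a0"
      apply (rule incr_strict[where f = u and f' = du])
      using zp apply simp
      using zp a0p r2R apply (intro duD; simp)
      using zp a0p Lsmall by (intro dupos) auto
    define k where "k = - u z"
    have kp: "k > 0" using \<open>u z < u a0\<close> \<open>\<not> u a0 > 0\<close> unfolding k_def by simp
    have uz: "u x \<le> u z" if "0 < x" "x \<le> z" for x
      apply (rule incr_weak[where f = u and f' = du])
      using that apply simp
      using that zp a0p r2R apply (intro duD; simp)
      using that zp a0p Lsmall dupos less_imp_le by (metis less_eq_real_def order.strict_trans order_le_less_trans)
    have F: "L z + k * ln z \<le> L x + k * ln x" if "0 < x" "x \<le> z" for x
    proof -
      have "-(L x + k * ln x) \<le> -(L z + k * ln z)"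
      proof (rule incr_weak[where f = "\<lambda>x. -(L x + k * ln x)" and f' = "\<lambda>y. -(L' y + k * (1 / y))"])
        show "x \<le> z" using that by simp
        fix y assume y: "x \<le> y" "y \<le> z"
        then show "((\<lambda>x. -(L x + k * ln x)) has_real_derivative -(L' y + k * (1 / y))) (at y)"
          using that zp a0p r2R
          by (intro DERIV_minus DERIV_add DERIV_cmult dL DERIV_ln_divide) auto
      next
        fix y assume y: "x < y" "y < z"
        have sy: "0 < s y" "s y \<le> y" using sk[of y] y that zp a0p r2R by auto
        have "u y \<le> - k" using uz[of y] y that unfolding k_def by simp
        then have "L' y \<le> -k / s y" using sy unfolding u_def by (simp add: field_simps)
        also have "-k / s y \<le> -k / y" using sy kp by (simp add: frac_le)
        finally show "0 \<le> -(L' y + k * (1 / y))" by simp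
      qed
      then show ?thesis by simp
    qed
    obtain b1 where b1: "b1 > 0" "\<And>y. y > 0 \<Longrightarrow> y < b1 \<Longrightarrow> L y < c + 1"
      using order_tendstoD(2)[OF lim, of "c+1"] unfolding eventually_at_right_field by auto
    define M where "M = L z + k * ln z - c - 1"
    define x where "x = min (min b1 z) (exp (M / k)) / 2"
    have xp: "0 < x" "x < b1" "x \<le> z" "x < exp (M / k)" unfolding x_def using b1 zp exp_gt_zero[of "M/k"] by (auto simp: min_def)
    have "ln x < M / k" using xp by (metis exp_less_cancel_iff exp_ln)
    then have "k * ln x < M" using kp by (simp add: field_simps)
    then have "L x > c + 1" using F[of x] xp unfolding M_def by simp
    then show False using b1(2)[of x] xp by simp
  qed
  have Lpos: "L x > 0" if "a0 \<le> x" "x \<le> \<rho>2" for x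
  proof (rule ccontr)
    assume nx: "\<not> L x > 0"
    define S where "S = {a0..\<rho>2} \<inter> L -` {..0}"
    have cont: "continuous_on {a0..\<rho>2} L"
      apply (rule DERIV_atLeastAtMost_imp_continuous_on)
      using dL a0p r2R by (meson le_less_trans less_le_trans)
    have cl: "closed S" unfolding S_def by (rule continuous_closed_preimage[OF cont]) auto
    have ne: "S \<noteq> {}" using nx that unfolding S_def by auto
    have bb: "bdd_below S" unfolding S_def by (rule bdd_belowI[of _ a0]) auto
    define x0 where "x0 = Inf S"
    have x0S: "x0 \<in> S" unfolding x0_def by (rule closed_contains_Inf[OF ne bb cl])
    then have x0: "a0 \<le> x0" "x0 \<le> \<rho>2" "L x0 \<le> 0" unfolding S_def by auto
    have before: "L y > 0" if "a0 \<le> y" "y < x0" for y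
    proof (rule ccontr)
      assume "\<not> L y > 0"
      then have "y \<in> S" unfolding S_def using that x0 by auto
      then have "x0 \<le> y" unfolding x0_def using bb by (rule cInf_lower)
      then show False using that by simp
    qed
    have "L a0 > 0" using Lsmall a0p by auto
    then have ax: "a0 < x0" using x0 by (cases "a0 = x0") auto
    have uy: "u a0 \<le> u y" if "a0 \<le> y" "y < x0" for y
      apply (rule incr_weak[where f = u and f' = du])
      using that apply simp
      using that x0 a0p r2R apply (intro duD; simp)
      using that x0 a0p before dupos by (metis less_eq_real_def less_le_trans order.strict_trans)
    have "L a0 < L x0"
    proof (rule incr_strict[where f = L and f' = L'])
      show "a0 < x0" by (rule ax)
      fix y assume "a0 \<le> y" "y \<le> x0"
      then show "(L has_real_derivative L' y) (at y)" using dL a0p x0 r2R by simp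
    next
      fix y assume y: "a0 < y" "y < x0"
      have "s y > 0" using sk[of y] y a0p x0 r2R by auto
      moreover have "u y > 0" using uy[of y] y ua0 by simp
      ultimately show "L' y > 0" unfolding u_def by (simp add: zero_less_mult_iff)
    qed
    then show False using \<open>L a0 > 0\<close> x0 by simp
  qed
  have upos: "u x > 0" if "a0 \<le> x" "x \<le> \<rho>2" for x
  proof -
    have "u a0 \<le> u x"
      apply (rule incr_weak[where f = u and f' = du])
      using that apply simp
      using that a0p r2R apply (intro duD; simp)
      using that a0p Lpos dupos by (smt (verit))
    then show ?thesis using ua0 by simp
  qed
  define tt where "tt = (\<lambda>r. ln (tan (sqrt \<kappa> * r / 2)))"
  define A where "A = (\<lambda>r. a * (tt r - tt \<rho>1))"
  have dtt': "(tt has_real_derivative 1 / s r) (at r)" if "0 < r" "r < R" for r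
    unfolding tt_def s_def using dtt[OF kp that(1) that(2)[unfolded R_def]] .
  have dA: "(A has_real_derivative a * (1 / s r)) (at r)" if "0 < r" "r < R" for r
  proof -
    have "(A has_real_derivative a * (1 / s r - 0)) (at r)"
      unfolding A_def by (intro DERIV_cmult DERIV_diff dtt' that DERIV_const)
    then show ?thesis by simp
  qed
  define W where "W = (\<lambda>r. u r * cosh (A r) - a * L r * sinh (A r))"
  define dW where "dW = (\<lambda>r. cosh (A r) * L r * (m^2 - (s r)^2 - a^2) / s r)"
  have dWD: "(W has_real_derivative dW r) (at r)" if "0 < r" "r < R" for r
  proof -
    have sp: "s r > 0" using sk that by auto
    have d: "(W has_real_derivative
       (du r * cosh (A r) + (sinh (A r) * (a * (1 / s r))) * u r)
       - ((a * L' r) * sinh (A r) + (cosh (A r) * (a * (1 / s r))) * (a * L r))) (at r)"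
      unfolding W_def
      by (intro DERIV_diff DERIV_mult DERIV_cmult duD dL has_field_derivative_cosh has_field_derivative_sinh dA that)
    have "(du r * cosh (A r) + (sinh (A r) * (a * (1 / s r))) * u r)
       - ((a * L' r) * sinh (A r) + (cosh (A r) * (a * (1 / s r))) * (a * L r)) = dW r"
      unfolding du_def u_def dW_def using sp by (simp add: field_simps power2_eq_square)
    then show ?thesis using d by simp
  qed
  have A1: "A \<rho>1 = 0" unfolding A_def by simp
  have Wnn: "W x \<ge> 0" if "\<rho>1 \<le> x" "x \<le> \<rho>2" for x
  proof -
    have "W \<rho>1 \<le> W x"
    proof (rule incr_weak[where f = W and f' = dW])
      show "\<rho>1 \<le> x" by (rule that)
      fix y assume "\<rho>1 \<le> y" "y \<le> x"
      then show "(W has_real_derivative dW y) (at y)" using dWD assms(6) that r2R by simp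
    next
      fix y assume y: "\<rho>1 < y" "y < x"
      have "s y > 0" using sk[of y] y that assms(6) r2R by auto
      moreover have "L y > 0" using Lpos[of y] y that a0p by auto
      moreover have "m^2 - (s y)^2 - a^2 \<ge> 0" using slt[of y] y that assms(6) by auto
      ultimately show "0 \<le> dW y" unfolding dW_def by simp
    qed
    moreover have "W \<rho>1 = u \<rho>1" unfolding W_def using A1 by simp
    moreover have "u \<rho>1 > 0" using upos[of \<rho>1] a0p assms(7) by simp
    ultimately show ?thesis by simp
  qed
  define Q where "Q = (\<lambda>r. L r / cosh (A r))"
  have "Q \<rho>1 \<le> Q \<rho>2"
  proof (rule incr_weak[where f = Q and f' = "\<lambda>y. (L' y * cosh (A y) - L y * (sinh (A y) * (a * (1 / s y)))) / (cosh (A y) * cosh (A y))"])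
    show "\<rho>1 \<le> \<rho>2" using assms(7) by simp
    fix y assume "\<rho>1 \<le> y" "y \<le> \<rho>2"
    then have y: "0 < y" "y < R" using assms(6) r2R by auto
    show "(Q has_real_derivative (L' y * cosh (A y) - L y * (sinh (A y) * (a * (1 / s y)))) / (cosh (A y) * cosh (A y))) (at y)"
      unfolding Q_def by (intro DERIV_divide dL has_field_derivative_cosh dA y) simp
  next
    fix y assume y: "\<rho>1 < y" "y < \<rho>2"
    have sp: "s y > 0" using sk[of y] y assms(6) r2R by auto
    have "L' y * cosh (A y) - L y * (sinh (A y) * (a * (1 / s y))) = W y / s y"
      unfolding W_def u_def using sp by (simp add: field_simps)
    moreover have "W y \<ge> 0" using Wnn y by simp
    ultimately show "0 \<le> (L' y * cosh (A y) - L y * (sinh (A y) * (a * (1 / s y)))) / (cosh (A y) * cosh (A y))"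
      using sp by simp
  qed
  then have Lc: "L \<rho>1 * cosh (A \<rho>2) \<le> L \<rho>2" unfolding Q_def using A1
    by (simp add: pos_le_divide_eq)
  have "tt \<rho>1 - ln \<rho>1 \<le> tt \<rho>2 - ln \<rho>2"
  proof (rule incr_weak[where f = "\<lambda>r. tt r - ln r" and f' = "\<lambda>r. 1 / s r - 1 / r"])
    show "\<rho>1 \<le> \<rho>2" using assms(7) by simp
    fix y assume "\<rho>1 \<le> y" "y \<le> \<rho>2"
    then have y: "0 < y" "y < R" using assms(6) r2R by auto
    show "((\<lambda>r. tt r - ln r) has_real_derivative 1 / s y - 1 / y) (at y)"
      by (intro DERIV_diff dtt' DERIV_ln_divide y)
  next
    fix y assume y: "\<rho>1 < y" "y < \<rho>2"
    have "s y > 0" "s y \<le> y" using sk[of y] y assms(6) r2R by auto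
    then show "0 \<le> 1 / s y - 1 / y" by (simp add: frac_le)
  qed
  then have "ln (\<rho>2 / \<rho>1) \<le> tt \<rho>2 - tt \<rho>1" using assms(6,7) by (simp add: ln_div)
  then have Ay: "a * ln (\<rho>2 / \<rho>1) \<le> A \<rho>2" unfolding A_def using a0 by (simp add: mult_left_mono)
  have lnp: "ln (\<rho>2 / \<rho>1) \<ge> 0" using assms(6,7) by simp
  have "cosh (a * ln (\<rho>2 / \<rho>1)) \<le> cosh (A \<rho>2)"
    using cosh_real_nonneg_le_iff[of "a * ln (\<rho>2 / \<rho>1)" "A \<rho>2"] Ay mult_nonneg_nonneg[OF a0 lnp] by simp
  moreover have "(1/2) * ((\<rho>2/\<rho>1) powr a - (\<rho>2/\<rho>1) powr (- a)) \<le> cosh (a * ln (\<rho>2 / \<rho>1))"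
    using assms(6,7) by (simp add: powr_def cosh_def)
  moreover have "cosh (A \<rho>2) \<le> L \<rho>2 / L \<rho>1" using Lc Lpos[of \<rho>1] a0p assms(7)
    by (simp add: pos_le_divide_eq mult.commute)
  ultimately show ?thesis unfolding a_def by linarith
qed

end
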